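(* Let $0<r^0<r^1$. There exists $\sigma_0\in(0,1)$ such that, for given $\gamma>1$, $p_b^+(r_b)>0$, $\rho_b^+(r_b)>0$ and $t(r_b)=(M_b^+)^2(r_b)\in(0,\sigma_0)$, there exists $r_*\in(r^0,r^1)$ so that the background solution determined by $\gamma$, $r_b\in(r_*,r^1)$, $p_b^+(r_b)$, $\rho_b^+(r_b)$ and $t(r_b)$ satisfies the S-Condition.
   Context: Radial flows $U=(p,\rho,u^0\partial_r)$ of a polytropic gas ($c^2=\gamma p/\rho$) satisfy $\frac{du^0}{dr}=\frac{2c^2u^0}{r((u^0)^2-c^2)}$, $\frac{d\rho}{dr}=-\frac{2\rho(u^0)^2}{r((u^0)^2-c^2)}$, $\frac{dp}{dr}=-\frac{2\rho c^2(u^0)^2}{r((u^0)^2-c^2)}$. The (subsonic part $U_b^+$ of the) background solution determined by $(\gamma,r_b,p_b^+(r_b),\rho_b^+(r_b),t(r_b))$, with $r_b\in(r^0,r^1)$, $t(r_b)\in(0,1)$, is the radial solution on $[r_b,r^1]$ with $p=p_b^+(r_b)$, $\rho=\rho_b^+(r_b)$, $(u^0)^2=t(r_b)c^2>0$ at $r=r_b$; it is subsonic, $M_b^+=(u^0)_b^+/c_b^+$ and $t(r)=(M_b^+)^2(r)$. S-Condition. Put $t_s=t(r_b)$ and (quantities evaluated at $r_b$) $\mu_0=\frac{\gamma+1}{2}\frac{((u^0)_b^+)^2}{(c^2-(u^0)^2)_b^+}$, $\mu_2=-\frac{4\rho_b^+}{(\gamma+1)r_b}((\gamma-1)(u^0)^2+c^2)_b^+$,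 $\mu_5=\frac{r_b^2((u^0)^2-c^2)_b^+}{\gamma p_b^+(u^0)_b^+}$, $\mu_6=\frac{8\gamma(u^0)_b^+(r_b)}{(\gamma+1)(1-t_s)}((\gamma-1)t_s^2+t_s+1)$, $\mu_7=-\mu_0\mu_6$, $\mu_9=-\mu_0\mu_2\mu_5$. With $t=t(r)$ define $e_1=r^2(1-t)$, $e_2=\frac{2r}{1-t}((1+2\gamma)t^2-3t+4)$, $e_3=\frac{-2}{(t-1)^3}(6-19t-7t^2(\gamma-2)+t^4\gamma(1+2\gamma)+t^3(-3+2\gamma-4\gamma^2))$, $e_4=\frac{1-t_s}{(\rho_b^+(r_b))^\gamma(1+(\gamma-1)t_s)}\cdot\frac{2(\rho_b^+(r))^\gamma(2+(\gamma-1)t)}{(1-t)^3}((2\gamma-3)t^2+8t-3)$. For $\lambda_n=n(n+1)$, $n\ge0$, consider on $y\in[0,1]$, with $e_i$ evaluated at $r=(r^1-r_b)y+r_b$: $e_1v''+(r^1-r_b)e_2v'+(r^1-r_b)^2(e_3-\lambda_n)v=-(r^1-r_b)^2e_4$, $v(0)=1$, $v(1)=0$, $v'(0)=-\frac{\lambda_n+\mu_7}{\mu_9}(r^1-r_b)$. The background solution satisfies the S-Condition if for every $n\ge0$ this problem has no solution. *)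

theory Defs
  imports "HOL-Analysis.Analysis"
begin

definition csq :: "real \<Rightarrow> (real \<Rightarrow> real) \<Rightarrow> (real \<Rightarrow> real) \<Rightarrow> real \<Rightarrow> real" where
  "csq \<gamma> p rho r = \<gamma> * p r / rho r"

definition radial_sol :: "real \<Rightarrow> real \<Rightarrow> real \<Rightarrow> (real \<Rightarrow> real) \<Rightarrow> (real \<Rightarrow> real) \<Rightarrow> (real \<Rightarrow> real) \<Rightarrow> bool" where
  "radial_sol \<gamma> a b u rho p \<longleftrightarrow>
     (\<forall>r\<in>{a..b}.
        (u has_real_derivative
           (2 * csq \<gamma> p rho r * u r / (r * ((u r)^2 - csq \<gamma> p rho r)))) (at r within {a..b}) \<and>
        (rho has_real_derivative
           (- 2 * rho r * (u r)^2 / (r * ((u r)^2 - csq \<gamma> p rho r)))) (at r within {a..b}) \<and>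
        (p has_real_derivative
           (- 2 * rho r * csq \<gamma> p rho r * (u r)^2 / (r * ((u r)^2 - csq \<gamma> p rho r)))) (at r within {a..b}))"

definition background_sol ::
  "real \<Rightarrow> real \<Rightarrow> real \<Rightarrow> real \<Rightarrow> real \<Rightarrow> real \<Rightarrow> (real \<Rightarrow> real) \<Rightarrow> (real \<Rightarrow> real) \<Rightarrow> (real \<Rightarrow> real) \<Rightarrow> bool" where
  "background_sol \<gamma> r1 rb pb rhob ts u rho p \<longleftrightarrow>
     radial_sol \<gamma> rb r1 u rho p \<and>
     p rb = pb \<and> rho rb = rhob \<and> (u rb)^2 = ts * csq \<gamma> p rho rb \<and>
     (\<forall>r\<in>{rb..r1}. rho r > 0 \<and> p r > 0 \<and> u r > 0 \<and> (u r)^2 < csq \<gamma> p rho r)"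

definition tfun :: "real \<Rightarrow> (real \<Rightarrow> real) \<Rightarrow> (real \<Rightarrow> real) \<Rightarrow> (real \<Rightarrow> real) \<Rightarrow> real \<Rightarrow> real" where
  "tfun \<gamma> u rho p r = (u r)^2 / csq \<gamma> p rho r"

definition e1 :: "real \<Rightarrow> real \<Rightarrow> real" where
  "e1 r t = r^2 * (1 - t)"

definition e2 :: "real \<Rightarrow> real \<Rightarrow> real \<Rightarrow> real" where
  "e2 \<gamma> r t = 2 * r / (1 - t) * ((1 + 2*\<gamma>) * t^2 - 3*t + 4)"

definition e3 :: "real \<Rightarrow> real \<Rightarrow> real" where
  "e3 \<gamma> t = -2 / (t - 1)^3 *
     (6 - 19*t - 7 * t^2 * (\<gamma> - 2) + t^4 * \<gamma> * (1 + 2*\<gamma>) + t^3 * (-3 + 2*\<gamma> - 4*\<gamma>^2))"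

text \<open>e4 with ts = t(r_b), rhob = rho_b^+(r_b), rhor = rho_b^+(r), t = t(r).\<close>
definition e4 :: "real \<Rightarrow> real \<Rightarrow> real \<Rightarrow> real \<Rightarrow> real \<Rightarrow> real" where
  "e4 \<gamma> ts rhob rhor t =
     (1 - ts) / (rhob powr \<gamma> * (1 + (\<gamma> - 1) * ts)) *
     (2 * rhor powr \<gamma> * (2 + (\<gamma> - 1) * t) / (1 - t)^3 * ((2*\<gamma> - 3) * t^2 + 8*t - 3))"

definition mu0 :: "real \<Rightarrow> real \<Rightarrow> real \<Rightarrow> real" where
  "mu0 \<gamma> u c2 = (\<gamma> + 1) / 2 * u^2 / (c2 - u^2)"

definition mu2 :: "real \<Rightarrow> real \<Rightarrow> real \<Rightarrow> real \<Rightarrow> real \<Rightarrow> real" where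
  "mu2 \<gamma> rb rhob u c2 = - 4 * rhob / ((\<gamma> + 1) * rb) * ((\<gamma> - 1) * u^2 + c2)"

definition mu5 :: "real \<Rightarrow> real \<Rightarrow> real \<Rightarrow> real \<Rightarrow> real \<Rightarrow> real" where
  "mu5 \<gamma> rb pb u c2 = rb^2 * (u^2 - c2) / (\<gamma> * pb * u)"

definition mu6 :: "real \<Rightarrow> real \<Rightarrow> real \<Rightarrow> real" where
  "mu6 \<gamma> u ts = 8 * \<gamma> * u / ((\<gamma> + 1) * (1 - ts)) * ((\<gamma> - 1) * ts^2 + ts + 1)"

definition S_condition ::
  "real \<Rightarrow> real \<Rightarrow> real \<Rightarrow> (real \<Rightarrow> real) \<Rightarrow> (real \<Rightarrow> real) \<Rightarrow> (real \<Rightarrow> real) \<Rightarrow> bool" where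
  "S_condition \<gamma> r1 rb u rho p \<longleftrightarrow>
    (let ts = tfun \<gamma> u rho p rb;
         ub = u rb; c2b = csq \<gamma> p rho rb; rhob = rho rb; pb = p rb;
         m0 = mu0 \<gamma> ub c2b;
         m7 = - m0 * mu6 \<gamma> ub ts;
         m9 = - m0 * mu2 \<gamma> rb rhob ub c2b * mu5 \<gamma> rb pb ub c2b;
         L = r1 - rb;
         R = (\<lambda>y. L * y + rb);
         T = (\<lambda>y. tfun \<gamma> u rho p (R y))
     in \<forall>n::nat. let lam = real n * (real n + 1) in
        \<not> (\<exists>v v' v''.
              (\<forall>y\<in>{0..1}.
                 (v has_real_derivative v' y) (at y within {0..1}) \<and>
                 (v' has_real_derivative v'' y) (at y within {0..1}) \<and>
                 e1 (R y) (T y) * v'' y + L * e2 \<gamma> (R y) (T y) * v' y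
                   + L^2 * (e3 \<gamma> (T y) - lam) * v y
                 = - (L^2 * e4 \<gamma> ts rhob (rho (R y)) (T y))) \<and>
              v 0 = 1 \<and> v 1 = 0 \<and> v' 0 = - (lam + m7) / m9 * L))"

end

theory Submission
  imports Defs
begin


lemma mono_within:
  fixes f f' :: "real \<Rightarrow> real"
  assumes "a \<le> b"
    and d: "\<And>x. x\<in>{a..b} \<Longrightarrow> (f has_real_derivative f' x) (at x within {a..b})"
    and n: "\<And>x. x\<in>{a..b} \<Longrightarrow> f' x \<ge> 0"
  shows "f a \<le> f b"
proof -
  have "\<exists>x\<in>{a..b}. f b - f a = (\<lambda>h. f' x * h) (b - a)"
    apply (rule mvt_very_simple[OF \<open>a \<le> b\<close>])
    using d by (auto simp: has_field_derivative_def mult.commute[of _ "f' _"])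
  then obtain x where "x\<in>{a..b}" "f b - f a = f' x * (b - a)" by auto
  moreover have "f' x * (b - a) \<ge> 0" using n[OF \<open>x\<in>{a..b}\<close>] \<open>a \<le> b\<close> by simp
  ultimately show ?thesis by simp
qed

lemma mono_within_sub:
  fixes f f' :: "real \<Rightarrow> real"
  assumes "a \<le> x" "x \<le> y" "y \<le> b"
    and d: "\<And>x. x\<in>{a..b} \<Longrightarrow> (f has_real_derivative f' x) (at x within {a..b})"
    and n: "\<And>z. z\<in>{x..y} \<Longrightarrow> f' z \<ge> 0"
  shows "f x \<le> f y"
proof (rule mono_within[OF \<open>x \<le> y\<close>])
  fix z assume z: "z \<in> {x..y}"
  then have "z \<in> {a..b}" using assms by auto
  from d[OF this] show "(f has_real_derivative f' z) (at z within {x..y})"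
    by (rule DERIV_subset) (use assms in auto)
qed (use n in auto)

lemma first_zero:
  fixes h :: "real \<Rightarrow> real"
  assumes c: "continuous_on {0..1} h" and h0: "h 0 > 0"
    and ex: "y0 \<in> {0..1}" "h y0 \<le> 0"
  shows "\<exists>y\<in>{0<..1}. h y = 0 \<and> (\<forall>z\<in>{0..<y}. h z > 0)"
proof -
  let ?S = "{x \<in> {0..1}. h x = 0}"
  have "\<exists>x. 0 \<le> x \<and> x \<le> y0 \<and> h x = 0"
    by (rule IVT2'[of h y0 0 0]) (use ex h0 in \<open>auto intro: continuous_on_subset[OF c]\<close>)
  then have ne: "?S \<noteq> {}" using ex by force
  have cl: "closed ?S" by (rule continuous_closed_preimage_constant[OF c]) auto
  have bb: "bdd_below ?S" by (auto intro: bdd_belowI[of _ 0])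
  define y where "y = Inf ?S"
  have yS: "y \<in> ?S" unfolding y_def by (rule closed_contains_Inf[OF ne bb cl])
  have ymin: "\<And>x. x \<in> ?S \<Longrightarrow> y \<le> x" unfolding y_def by (rule cInf_lower[OF _ bb])
  have ypos: "y > 0" using yS h0 by (cases "y = 0") auto
  have "h z > 0" if z: "z\<in>{0..<y}" for z
  proof (rule ccontr)
    assume "\<not> h z > 0"
    then have "\<exists>x. 0 \<le> x \<and> x \<le> z \<and> h x = 0"
      by (intro IVT2'[of h z 0 0]) (use z yS h0 in \<open>auto intro: continuous_on_subset[OF c]\<close>)
    then obtain x where "0 \<le> x" "x \<le> z" "h x = 0" by auto
    then have "x \<in> ?S" using z yS by auto
    then show False using ymin[of x] \<open>x \<le> z\<close> z by auto
  qed
  then show ?thesis using yS ypos by auto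
qed

lemma first_zero_deriv:
  fixes h :: "real \<Rightarrow> real"
  assumes d: "(h has_real_derivative l) (at y within {0..1})"
    and y: "0 < y" "y \<le> 1" and hy: "h y = 0" and pos: "\<forall>z\<in>{0..<y}. h z > 0"
  shows "l \<le> 0"
proof (rule ccontr)
  assume "\<not> l \<le> 0"
  then have "l > 0" by simp
  from has_real_derivative_pos_inc_left[OF d this] obtain d where
    "d > 0" and dd: "\<forall>e>0. y - e \<in> {0..1} \<longrightarrow> e < d \<longrightarrow> h (y - e) < h y" by auto
  define e where "e = min (d/2) y"
  have "e > 0" "e < d" "e \<le> y" using \<open>d>0\<close> y by (auto simp: e_def)
  then have "h (y - e) < 0" using dd y hy by auto
  moreover have "y - e \<in> {0..<y}" using \<open>e>0\<close> \<open>e \<le> y\<close> by auto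
  ultimately show False using pos by (meson less_asym)
qed

lemma core_ode:
  fixes v v' v'' :: "real \<Rightarrow> real" and g0 :: real
  assumes d1: "\<And>y. y\<in>{0..1} \<Longrightarrow> (v has_real_derivative v' y) (at y within {0..1})"
    and d2: "\<And>y. y\<in>{0..1} \<Longrightarrow> (v' has_real_derivative v'' y) (at y within {0..1})"
    and v0: "v 0 = 1" and g0: "0 \<le> g0" "g0 \<le> 1/20" and h0: "v' 0 + g0 > 0"
    and P: "\<And>y g. y\<in>{0..1} \<Longrightarrow> 0 \<le> g \<Longrightarrow> g \<le> 3/10 \<Longrightarrow> v y \<ge> 1/2 \<Longrightarrow> v' y = - g * v y
              \<Longrightarrow> v'' y + (1/4 - g^2) * v y > 0"
  shows "v 1 > 0"
proof -
  define gf where "gf y = g0 + y/4" for y :: real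
  define h where "h y = v' y + gf y * v y" for y
  define G where "G y = g0 * y + y^2/8" for y :: real
  have dh: "(h has_real_derivative (v'' y + 1/4 * v y + gf y * v' y)) (at y within {0..1})"
    if "y\<in>{0..1}" for y
  proof -
    have "((\<lambda>y. v' y + (g0 + y/4) * v y) has_real_derivative
       (v'' y + ((0 + 1/4) * v y + (g0 + y/4) * v' y))) (at y within {0..1})"
    proof (intro DERIV_add d2 that)
      have gd: "((\<lambda>x. g0 + x / 4) has_real_derivative (0 + 1/4)) (at y within {0..1})"
        by (intro DERIV_add DERIV_const) (rule DERIV_ident[THEN DERIV_cdivide[where c=4], simplified])
      have "((\<lambda>x. (g0 + x / 4) * v x) has_real_derivative (g0 + y / 4) * v' y + (0 + 1/4) * v y) (at y within {0..1})"
        by (rule DERIV_mult'[OF gd d1[OF that]])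
      then show "((\<lambda>x. (g0 + x / 4) * v x) has_real_derivative (0 + 1/4) * v y + (g0 + y / 4) * v' y) (at y within {0..1})" by (simp only: add.commute)
    qed
    then show ?thesis unfolding h_def gf_def by (simp add: algebra_simps)
  qed
  have cv: "continuous_on {0..1} v"
    using d1 by (meson DERIV_continuous continuous_at_imp_continuous_on continuous_on_eq_continuous_within)
  have ch: "continuous_on {0..1} h"
    using dh by (meson DERIV_continuous continuous_on_eq_continuous_within)
  have K: "v y \<ge> 1/2" if y: "y\<in>{0..1}" and hp: "\<forall>z\<in>{0..y}. h z \<ge> 0" for y
  proof -
    define F where "F z = v z * exp (G z)" for z
    have dF: "(F has_real_derivative (h z * exp (G z))) (at z within {0..1})" if "z\<in>{0..1}" for z
    proof -
      have "((\<lambda>z. g0 * z + z^2/8) has_real_derivative (g0 + z/4)) (at z within {0..1})"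
        by (auto intro!: derivative_eq_intros)
      then have e: "((\<lambda>z. exp (G z)) has_real_derivative exp (G z) * (g0 + z/4)) (at z within {0..1})"
        unfolding G_def by (rule DERIV_exp[THEN DERIV_chain2])
      have "(F has_real_derivative (v z * (exp (G z) * (g0 + z/4)) + v' z * exp (G z))) (at z within {0..1})"
        unfolding F_def by (rule DERIV_mult'[OF d1[OF that] e])
      then show ?thesis by (simp add: h_def gf_def algebra_simps)
    qed
    have "F 0 \<le> F y"
      by (rule mono_within_sub[of 0 0 y 1 F, OF _ _ _ dF]) (use y hp in auto)
    then have "1 \<le> v y * exp (G y)" by (simp add: F_def G_def v0)
    then have "exp (- G y) \<le> v y" by (simp add: exp_minus field_simps)
    moreover have "1 - G y \<le> exp (- G y)" using exp_ge_add_one_self[of "- G y"] by simp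
    moreover have "G y \<le> 1/20 + 1/8"
    proof -
      have "g0 * y \<le> g0" using g0 y by (intro mult_left_le) auto
      then have "g0 * y \<le> 1/20" using g0 by linarith
      moreover have "y^2 \<le> 1" using y by (simp add: power_le_one)
      ultimately show ?thesis by (simp add: G_def)
    qed
    ultimately show ?thesis by simp
  qed
  show ?thesis
  proof (cases "\<forall>y\<in>{0..1}. h y > 0")
    case True
    then have "v 1 \<ge> 1/2" by (intro K) (auto simp: less_imp_le)
    then show ?thesis by simp
  next
    case False
    then obtain y0 where "y0 \<in> {0..1}" "h y0 \<le> 0" by (auto simp: not_less)
    moreover have "h 0 > 0" using h0 v0 by (simp add: h_def gf_def)
    ultimately obtain y where y: "y\<in>{0<..1}" and hy: "h y = 0" and pos: "\<forall>z\<in>{0..<y}. h z > 0"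
      using first_zero[OF ch] by blast
    have y01: "y \<in> {0..1}" using y by auto
    have vy: "v y \<ge> 1/2" using K[OF y01] pos hy
      by (metis atLeastAtMost_iff atLeastLessThan_iff le_less)
    have vd: "v' y = - gf y * v y" using hy by (simp add: h_def)
    have "v'' y + (1/4 - (gf y)^2) * v y > 0"
      by (rule P[OF y01 _ _ vy vd]) (use g0 y in \<open>auto simp: gf_def\<close>)
    moreover have "v'' y + 1/4 * v y + gf y * v' y \<le> 0"
      by (rule first_zero_deriv[OF dh[OF y01] _ _ hy pos]) (use y in auto)
    ultimately show ?thesis using vd by (simp add: power2_eq_square algebra_simps)
  qed
qed


lemma tsign:
  fixes U Ud R Rd P Pd r \<gamma> c :: real
  assumes U: "U > 0" and R: "R > 0" and P: "P > 0" and r: "r > 0" and g: "\<gamma> > 1"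
    and c: "c = \<gamma> * P / R" and sub: "U^2 < c"
    and Ud: "Ud = 2 * c * U / (r * (U^2 - c))"
    and Rd: "Rd = - 2 * R * U^2 / (r * (U^2 - c))"
    and Pd: "Pd = - 2 * R * c * U^2 / (r * (U^2 - c))"
  shows "(U * Ud + Ud * U) * R * P + U * U * Rd * P - U * U * R * Pd \<le> 0"
proof -
  define D where "D = r * (U^2 - c)"
  have D: "D < 0" unfolding D_def using r sub by (simp add: mult_pos_neg)
  have cpos: "c > 0" using sub zero_le_power2[of U] by linarith
  have Rc: "R * c = \<gamma> * P" using c R by simp
  have "(U * Ud + Ud * U) * R * P + U * U * Rd * P - U * U * R * Pd
      = (2 * R * U^2 * P * (2 * c + (\<gamma> - 1) * U^2)) / D"
  proof -
    have "(U * Ud + Ud * U) * R * P = 4 * c * U^2 * R * P / D" unfolding Ud D_def by (simp add: power2_eq_square)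
    moreover have "U * U * Rd * P = - 2 * R * U^2 * U^2 * P / D" unfolding Rd D_def by (simp add: power2_eq_square)
    moreover have "U * U * R * Pd = - 2 * R * (R * c) * U^2 * U^2 / D" unfolding Pd D_def by (simp add: power2_eq_square)
    ultimately show ?thesis unfolding Rc by (simp add: add_divide_distrib diff_divide_distrib algebra_simps)
  qed
  also have "\<dots> \<le> 0"
    using U R P sub g D cpos by (intro divide_nonneg_neg mult_nonneg_nonneg add_nonneg_nonneg) auto
  finally show ?thesis .
qed

lemma rsign:
  fixes U R r r0 c Rd :: real
  assumes R: "R > 0" and r: "r0 \<le> r" and r0: "0 < r0" and half: "U^2 \<le> c / 2" and sub: "U^2 < c"
    and Rd: "Rd = - 2 * R * U^2 / (r * (U^2 - c))"
  shows "Rd \<le> 2 / r0 * R"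
proof -
  have rp: "r > 0" using r r0 by simp
  have cm: "c - U^2 > 0" using sub by simp
  have e: "r * (U^2 - c) = - (r * (c - U^2))" by (simp add: algebra_simps)
  have "Rd = 2 * R * U^2 / (r * (c - U^2))" unfolding Rd e by simp
  also have "\<dots> \<le> 2 * R * (c - U^2) / (r * (c - U^2))"
    using half R rp cm by (intro divide_right_mono mult_left_mono) auto
  also have "\<dots> = 2 * R / r" using cm by simp
  also have "\<dots> \<le> 2 * R / r0" using R r r0 by (intro divide_left_mono) auto
  finally show ?thesis by simp
qed



lemma bg_bounds:
  fixes \<gamma> r0 r1 rb pb rhob ts :: real and u rho p :: "real \<Rightarrow> real"
  assumes r0: "0 < r0" "r0 < rb" "rb < r1" and g: "\<gamma> > 1" and ts: "0 < ts" "ts < 1/2"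
    and bg: "background_sol \<gamma> r1 rb pb rhob ts u rho p"
  shows "\<forall>r\<in>{rb..r1}. 0 < tfun \<gamma> u rho p r \<and> tfun \<gamma> u rho p r \<le> ts \<and> rho r \<le> rhob * exp (2 * r1 / r0)"
proof -
  define c where "c r = csq \<gamma> p rho r" for r
  define ud where "ud r = 2 * c r * u r / (r * ((u r)^2 - c r))" for r
  define rd where "rd r = - 2 * rho r * (u r)^2 / (r * ((u r)^2 - c r))" for r
  define pd where "pd r = - 2 * rho r * c r * (u r)^2 / (r * ((u r)^2 - c r))" for r
  have du: "(u has_real_derivative ud r) (at r within {rb..r1})"
    and dr: "(rho has_real_derivative rd r) (at r within {rb..r1})"
    and dp: "(p has_real_derivative pd r) (at r within {rb..r1})"
    and pos: "rho r > 0" "p r > 0" "u r > 0" "(u r)^2 < c r"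
    if "r \<in> {rb..r1}" for r
    using bg that unfolding background_sol_def radial_sol_def ud_def rd_def pd_def c_def by auto
  have init: "p rb = pb" "rho rb = rhob" "(u rb)^2 = ts * c rb"
    using bg unfolding background_sol_def c_def by auto
  have ceq: "c r = \<gamma> * p r / rho r" for r unfolding c_def csq_def by simp
  have rbI: "rb \<in> {rb..r1}" using r0 by auto
  have cpos: "c r > 0" if "r \<in> {rb..r1}" for r using pos[OF that] g by (simp add: ceq)
  define F where "F r = u r * u r * rho r / p r" for r
  define Fd where "Fd r = ((u r * u r) * rd r + (u r * ud r + ud r * u r) * rho r) * p r - (u r * u r * rho r) * pd r" for r
  have dF: "(F has_real_derivative (Fd r / (p r * p r))) (at r within {rb..r1})" if "r \<in> {rb..r1}" for r
  proof -
    have "((\<lambda>x. u x * u x) has_real_derivative (u r * ud r + ud r * u r)) (at r within {rb..r1})"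
      by (rule DERIV_mult'[OF du[OF that] du[OF that]])
    then have "((\<lambda>x. u x * u x * rho x) has_real_derivative ((u r * u r) * rd r + (u r * ud r + ud r * u r) * rho r)) (at r within {rb..r1})"
      by (rule DERIV_mult'[OF _ dr[OF that]])
    then show ?thesis unfolding F_def Fd_def
      by (rule DERIV_divide[OF _ dp[OF that]]) (use pos[OF that] in simp)
  qed
  have Fdn: "Fd r / (p r * p r) \<le> 0" if "r \<in> {rb..r1}" for r
  proof -
    have rp: "r > 0" using that r0 by auto
    have "(u r * ud r + ud r * u r) * rho r * p r + u r * u r * rd r * p r - u r * u r * rho r * pd r \<le> 0"
      by (rule tsign[OF pos(3)[OF that] pos(1)[OF that] pos(2)[OF that] rp g ceq pos(4)[OF that]])
         (simp_all add: ud_def rd_def pd_def)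
    then have "Fd r \<le> 0" unfolding Fd_def by (simp add: algebra_simps)
    then show ?thesis by (simp add: divide_nonpos_pos pos[OF that])
  qed
  have tf: "tfun \<gamma> u rho p r = F r / \<gamma>" if "r \<in> {rb..r1}" for r
    unfolding tfun_def F_def csq_def using pos[OF that] g by (simp add: field_simps power2_eq_square)
  have tsb: "tfun \<gamma> u rho p rb = ts"
    unfolding tfun_def using init cpos[OF rbI] by (simp add: c_def)
  have tle: "tfun \<gamma> u rho p r \<le> ts" if r: "r \<in> {rb..r1}" for r
  proof -
    have "- F rb \<le> - F r"
    proof (rule mono_within_sub[of rb rb r r1 "\<lambda>x. - F x" "\<lambda>x. - (Fd x / (p x * p x))"])
      show "((\<lambda>x. - F x) has_real_derivative - (Fd x / (p x * p x))) (at x within {rb..r1})"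
        if "x \<in> {rb..r1}" for x using dF[OF that] by (rule DERIV_minus)
      show "0 \<le> - (Fd z / (p z * p z))" if "z \<in> {rb..r}" for z
        using Fdn[of z] that r by auto
    qed (use r in auto)
    then have "F r / \<gamma> \<le> F rb / \<gamma>" using g by (simp add: divide_right_mono)
    then show ?thesis using tf[OF r] tf[OF rbI] tsb by simp
  qed
  have tpos: "0 < tfun \<gamma> u rho p r" if "r \<in> {rb..r1}" for r
    unfolding tfun_def c_def[symmetric] using pos[OF that] cpos[OF that] by simp
  define H where "H r = rho r * exp (- (2 / r0) * r)" for r
  have rdb: "rd r \<le> 2 / r0 * rho r" if r: "r \<in> {rb..r1}" for r
  proof (rule rsign[OF pos(1)[OF r] _ r0(1) _ pos(4)[OF r]])
    show "r0 \<le> r" using r r0 by auto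
    have "(u r)^2 / c r \<le> 1/2" using tle[OF r] ts unfolding tfun_def c_def[symmetric] by linarith
    then show "(u r)^2 \<le> c r / 2" using cpos[OF r] by (simp add: divide_le_eq)
  qed (simp add: rd_def)
  have rhob: "rho r \<le> rhob * exp (2 * r1 / r0)" if r: "r \<in> {rb..r1}" for r
  proof -
    have dH: "(H has_real_derivative (rho x * (exp (- (2 / r0) * x) * (- (2 / r0))) + rd x * exp (- (2 / r0) * x)))
        (at x within {rb..r1})" if "x \<in> {rb..r1}" for x
    proof -
      have "((\<lambda>x. exp (- (2 / r0) * x)) has_real_derivative exp (- (2 / r0) * x) * (- (2 / r0))) (at x within {rb..r1})"
        by (rule DERIV_exp[THEN DERIV_chain2]) (use r0 in \<open>auto intro!: derivative_eq_intros\<close>)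
      from DERIV_mult'[OF dr[OF that] this] show ?thesis unfolding H_def .
    qed
    have "- H rb \<le> - H r"
    proof (rule mono_within_sub[of rb rb r r1 "\<lambda>x. - H x"
        "\<lambda>x. - (rho x * (exp (- (2 / r0) * x) * (- (2 / r0))) + rd x * exp (- (2 / r0) * x))"])
      show "((\<lambda>x. - H x) has_real_derivative - (rho x * (exp (- (2 / r0) * x) * (- (2 / r0))) + rd x * exp (- (2 / r0) * x))) (at x within {rb..r1})"
        if "x \<in> {rb..r1}" for x using dH[OF that] by (rule DERIV_minus)
      show "0 \<le> - (rho z * (exp (- (2 / r0) * z) * (- (2 / r0))) + rd z * exp (- (2 / r0) * z))"
        if "z \<in> {rb..r}" for z
      proof -
        have z: "z \<in> {rb..r1}" using that r by auto
        have "rd z * exp (- (2 / r0) * z) \<le> 2 / r0 * rho z * exp (- (2 / r0) * z)"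
          using rdb[OF z] by (intro mult_right_mono) auto
        then show ?thesis by (simp add: algebra_simps)
      qed
    qed (use r in auto)
    then have "rho r * exp (- (2 / r0) * r) \<le> rhob * exp (- (2 / r0) * rb)"
      unfolding H_def using init by simp
    also have "\<dots> \<le> rhob" using bg r0 ts init pos[OF rbI] by simp
    finally have "rho r * exp (- (2 / r0) * r) \<le> rhob" .
    then have "rho r \<le> rhob * exp ((2 / r0) * r)"
      by (simp add: exp_minus field_simps)
    also have "\<dots> \<le> rhob * exp (2 * r1 / r0)"
      using r r0 pos[OF rbI] init by (intro mult_left_mono) (auto simp: divide_right_mono)
    finally show ?thesis .
  qed
  show ?thesis using tpos tle rhob by blast
qed



lemma mu6_ratio_eq:
  assumes g: "1 < \<gamma>" and rb: "0 < rb" and ub: "0 < ub" and ts: "0 < ts" "ts < 1" and c2: "c2 > 0"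
    and ubs: "ub^2 = ts * c2" and W: "W > 0"
  shows "mu6 \<gamma> ub ts / (4 * rb * W * (1 - ts) * c2 / ((\<gamma> + 1) * ub))
  = 2 * \<gamma> * ts * ((\<gamma> - 1) * ts^2 + ts + 1) / ((1 - ts)^2 * rb * W)"
proof -
  define Q where "Q = (\<gamma> - 1) * ts^2 + ts + 1"
  have S1: "mu6 \<gamma> ub ts = (8*\<gamma>/(\<gamma>+1)) * (ub * Q / (1-ts))" unfolding mu6_def Q_def by simp
  have S2: "4 * rb * W * (1 - ts) * c2 / ((\<gamma> + 1) * ub) = (4/(\<gamma>+1)) * (rb * W * (1-ts) * c2 / ub)"
    by simp
  have S3: "(8*\<gamma>/(\<gamma>+1)) / (4/(\<gamma>+1)) = 2 * \<gamma>" using g by (simp add: field_simps)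
  have S4: "(ub * Q / (1-ts)) / (rb * W * (1-ts) * c2 / ub) = (ub^2/c2) * Q / ((1-ts)^2 * rb * W)"
    using ub c2 ts by (simp add: field_simps power2_eq_square)
  have S5: "ub^2/c2 = ts" using ubs c2 by simp
  have G: "(a*x)/(b*y) = (a/b)*(x/y)" for a b x y :: real by simp
  have "mu6 \<gamma> ub ts / (4 * rb * W * (1 - ts) * c2 / ((\<gamma> + 1) * ub))
     = ((8*\<gamma>/(\<gamma>+1)) * (ub * Q / (1-ts))) / ((4/(\<gamma>+1)) * (rb * W * (1-ts) * c2 / ub))"
    by (simp only: S1 S2)
  also have "\<dots> = (8*\<gamma>/(\<gamma>+1)) / (4/(\<gamma>+1)) * ((ub * Q / (1-ts)) / (rb * W * (1-ts) * c2 / ub))"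
    by (rule G)
  also have "\<dots> = 2 * \<gamma> * (ts * Q / ((1-ts)^2 * rb * W))"
    by (simp only: S3 S4 S5)
  finally show ?thesis by (simp add: Q_def)
qed

lemma reorg: "(a::real) * (c*w) * (c*z) / (g*c*u) = (a*w*z*c)*c / ((g*u)*c)"
proof -
  have "a * (c*w) * (c*z) = (a*w*z*c)*c" by algebra
  moreover have "g*c*u = (g*u)*c" by algebra
  ultimately show ?thesis by simp
qed

lemma aux_eq1:
  fixes a b l x y :: real
  assumes "a > 0" "x * y > 0"
  shows "- (l + (- a * b)) / (- a * x * y) = l / (a * (x * y)) - b / (x * y)"
proof -
  from assms have D: "a * (x*y) \<noteq> 0" by (metis less_irrefl mult_eq_0_iff)
  have "- a * x * y = - (a * (x * y))" by simp
  then have "- (l + (- a * b)) / (- a * x * y) = (l - a * b) / (a * (x * y))"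
    using D by (simp add: divide_simps)
  also have "\<dots> = l / (a * (x * y)) - (a * b) / (a * (x * y))" by (simp add: diff_divide_distrib)
  also have "(a * b) / (a * (x * y)) = b / (x * y)" using assms by simp
  finally show ?thesis by simp
qed

lemma P_formula:
  fixes \<gamma> pb rhob ts rb ub c2 :: real
  assumes g: "\<gamma> > 1" and rh: "rhob > 0" and rb: "0 < rb" and ub: "ub > 0" and c2: "c2 = \<gamma> * pb / rhob"
    and c2p: "c2 > 0" and ubs: "ub^2 = ts * c2"
  shows "mu2 \<gamma> rb rhob ub c2 * mu5 \<gamma> rb pb ub c2 = 4 * rb * ((\<gamma> - 1) * ts + 1) * (1 - ts) * c2 / ((\<gamma> + 1) * ub)"
proof -
  have pbe: "pb = c2 * rhob / \<gamma>" using c2 g rh by simp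
  have "mu2 \<gamma> rb rhob ub c2 * mu5 \<gamma> rb pb ub c2 = 4 * rb * ((\<gamma> - 1) * ub^2 + c2) * (c2 - ub^2) / ((\<gamma> + 1) * c2 * ub)"
    unfolding mu2_def mu5_def pbe using g rh rb c2p ub
    apply (simp add: divide_simps)
    apply (auto simp: algebra_simps power2_eq_square)
    done
  also have "\<dots> = 4 * rb * (c2 * ((\<gamma> - 1) * ts + 1)) * (c2 * (1 - ts)) / ((\<gamma> + 1) * c2 * ub)"
    by (simp add: ubs algebra_simps)
  also have "\<dots> = (4 * rb * ((\<gamma> - 1) * ts + 1) * (1 - ts) * c2) * c2 / (((\<gamma> + 1) * ub) * c2)"
    by (rule reorg)
  also have "\<dots> = 4 * rb * ((\<gamma> - 1) * ts + 1) * (1 - ts) * c2 / ((\<gamma> + 1) * ub)"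
    using c2p by (intro nonzero_mult_divide_mult_cancel_right) simp
  finally show ?thesis .
qed


lemma ratio_bound:
  fixes \<gamma> ts rb r0 :: real
  assumes g: "\<gamma> > 1" and ts: "0 < ts" "ts < 1/2" and rb: "r0 \<le> rb" "0 < r0"
  shows "2 * \<gamma> * ts * ((\<gamma> - 1) * ts^2 + ts + 1) / ((1 - ts)^2 * rb * ((\<gamma> - 1) * ts + 1)) \<le> 8 * \<gamma> / r0"
proof -
  define Q where "Q = (\<gamma> - 1) * ts^2 + ts + 1"
  define W where "W = (\<gamma> - 1) * ts + 1"
  have Wp: "W > 0" unfolding W_def using g ts by (intro add_nonneg_pos mult_nonneg_nonneg) auto
  have "2 * \<gamma> * ts * Q / ((1 - ts)^2 * rb * W) \<le> 2 * \<gamma> * (1/2) * (2 * W) / ((1/4) * r0 * W)"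
  proof (rule frac_le)
    have "(\<gamma> - 1) * ts^2 \<le> (\<gamma> - 1) * ts"
    proof (rule mult_left_mono)
      show "ts^2 \<le> ts" using ts by (simp add: power2_eq_square mult_left_le)
    qed (use g in auto)
    moreover have "0 \<le> (\<gamma> - 1) * ts" using g ts by simp
    ultimately have "(\<gamma> - 1) * ts^2 + ts + 1 \<le> 2 * ((\<gamma> - 1) * ts) + 2" using ts by linarith
    then have "Q \<le> 2 * W" by (simp add: Q_def W_def)
    moreover have "Q \<ge> 0" unfolding Q_def using g ts by (intro add_nonneg_nonneg) auto
    ultimately show "2 * \<gamma> * ts * Q \<le> 2 * \<gamma> * (1/2) * (2 * W)"
      using g ts by (intro mult_mono) auto
    show "0 \<le> 2 * \<gamma> * (1/2) * (2 * W)" using g Wp by simp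
    show "0 < 1/4 * r0 * W" using Wp rb by simp
    have "(1/2)^2 \<le> (1 - ts)^2" using ts by (intro power_mono) auto
    then have "1/4 \<le> (1 - ts)^2" by (simp add: power2_eq_square)
    then show "1/4 * r0 * W \<le> (1 - ts)^2 * rb * W"
      using Wp rb by (intro mult_right_mono mult_mono) auto
  qed
  also have "\<dots> = 8 * \<gamma> / r0" using Wp rb by (simp add: field_simps)
  finally show ?thesis unfolding Q_def W_def .
qed


lemma mu_ratio:
  fixes \<gamma> pb rhob ts rb r0 ub c2 lam :: real
  assumes g: "\<gamma> > 1" and pb: "pb > 0" and rh: "rhob > 0" and ts: "0 < ts" "ts < 1/2"
    and rb: "r0 \<le> rb" "0 < r0" and ub: "ub > 0" and c2: "c2 = \<gamma> * pb / rhob"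
    and ubs: "ub^2 = ts * c2" and lam: "lam \<ge> 0"
  shows "- (lam + (- mu0 \<gamma> ub c2 * mu6 \<gamma> ub ts)) / (- mu0 \<gamma> ub c2 * mu2 \<gamma> rb rhob ub c2 * mu5 \<gamma> rb pb ub c2)
         \<ge> - (8 * \<gamma> / r0)"
proof -
  have c2p: "c2 > 0" using c2 g pb rh by simp
  have lt: "ub^2 < c2" using ubs ts c2p by simp
  have rbp: "rb > 0" using rb by simp
  have m0: "mu0 \<gamma> ub c2 > 0" unfolding mu0_def using g ub lt by simp
  define P where "P = mu2 \<gamma> rb rhob ub c2 * mu5 \<gamma> rb pb ub c2"
  have Wp: "(\<gamma> - 1) * ts + 1 > 0" using g ts by (intro add_nonneg_pos mult_nonneg_nonneg) auto
  have Pe: "P = 4 * rb * ((\<gamma> - 1) * ts + 1) * (1 - ts) * c2 / ((\<gamma> + 1) * ub)"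
    unfolding P_def by (rule P_formula[OF g rh rbp ub c2 c2p ubs])
  have Pp: "P > 0" unfolding Pe using rbp Wp ts c2p g ub by (intro divide_pos_pos mult_pos_pos) auto
  have eq1: "- (lam + (- mu0 \<gamma> ub c2 * mu6 \<gamma> ub ts)) / (- mu0 \<gamma> ub c2 * mu2 \<gamma> rb rhob ub c2 * mu5 \<gamma> rb pb ub c2)
      = lam / (mu0 \<gamma> ub c2 * P) - mu6 \<gamma> ub ts / P"
    using aux_eq1[OF m0 Pp[unfolded P_def]] by (simp add: P_def)
  have "lam / (mu0 \<gamma> ub c2 * P) \<ge> 0" using lam m0 Pp by simp
  moreover have "mu6 \<gamma> ub ts / P \<le> 8 * \<gamma> / r0"
  proof -
    have "mu6 \<gamma> ub ts / P = 2 * \<gamma> * ts * ((\<gamma> - 1) * ts^2 + ts + 1) / ((1 - ts)^2 * rb * ((\<gamma> - 1) * ts + 1))"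
      unfolding Pe by (rule mu6_ratio_eq) (use g rbp ub ts c2p ubs Wp in auto)
    also have "\<dots> \<le> 8 * \<gamma> / r0" by (rule ratio_bound[OF g ts rb])
    finally show ?thesis .
  qed
  ultimately show ?thesis unfolding eq1 by linarith
qed



lemma cont_bound:
  fixes f :: "real \<Rightarrow> real"
  assumes "continuous_on {0..1/2} f"
  shows "\<exists>B. \<forall>t\<in>{0..1/2}. \<bar>f t\<bar> \<le> B"
proof -
  have "compact (f ` {0..1/2})" by (rule compact_continuous_image[OF assms]) simp
  then have "bounded (f ` {0..1/2})" by (rule compact_imp_bounded)
  then obtain B where "\<forall>x\<in>f ` {0..1/2}. norm x \<le> B" by (auto simp: bounded_iff)
  then show ?thesis by auto
qed

lemma Pcheck:
  fixes E1 E2 E3 E4 L lam V V' V'' g r0 B :: real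
  assumes E1: "E1 \<ge> r0^2/2" and r0: "r0 > 0" and b2: "\<bar>E2\<bar> \<le> B" and b3: "\<bar>E3\<bar> \<le> B" and b4: "\<bar>E4\<bar> \<le> B"
    and L: "0 < L" "L \<le> 1" "L * B \<le> r0^2/100" and lam: "lam \<ge> 0" and V: "V \<ge> 1/2"
    and g: "0 \<le> g" "g \<le> 3/10" and Vd: "V' = - g * V"
    and ode: "E1 * V'' + L * E2 * V' + L^2 * (E3 - lam) * V = - (L^2 * E4)"
  shows "V'' + (1/4 - g^2) * V > 0"
proof -
  define S where "S = L * B"
  define q where "q = r0^2"
  have qp: "q > 0" using r0 by (simp add: q_def)
  have Sq: "S \<le> q / 100" using L by (simp add: S_def q_def)
  have Vp: "V > 0" using V by simp
  have L2: "L^2 \<le> L" using L by (simp add: power2_eq_square mult_left_le)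
  have T1: "L * E2 * g * V \<ge> - (S * V)"
  proof -
    have "\<bar>L * E2 * g * V\<bar> = L * \<bar>E2\<bar> * g * V" using L g Vp by (simp add: abs_mult)
    also have "\<dots> \<le> L * B * 1 * V" using L g Vp b2 by (intro mult_mono mult_right_mono) auto
    finally show ?thesis by (simp add: S_def)
  qed
  have T2: "L^2 * E3 * V \<le> S * V"
  proof -
    have "L^2 * E3 * V \<le> L^2 * \<bar>E3\<bar> * V" using Vp by (intro mult_right_mono mult_left_mono) auto
    also have "\<dots> \<le> L * B * V" using L2 b3 Vp L by (intro mult_right_mono mult_mono) auto
    finally show ?thesis by (simp add: S_def)
  qed
  have T3: "L^2 * lam * V \<ge> 0" using lam Vp by simp
  have T4: "L^2 * E4 \<le> S"
  proof -
    have "L^2 * E4 \<le> L^2 * \<bar>E4\<bar>" by (intro mult_left_mono) auto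
    also have "\<dots> \<le> L * B" using L2 b4 L by (intro mult_mono) auto
    finally show ?thesis by (simp add: S_def)
  qed
  have E1p: "E1 > 0" using E1 r0 by (smt (verit) zero_less_power2 half_gt_zero_iff)
  have T5: "E1 * (1/4 - g^2) * V \<ge> (q/2) * (4/25) * V"
  proof -
    have "g^2 \<le> (3/10)^2" using g by (intro power_mono) auto
    then have "4/25 \<le> 1/4 - g^2" by (simp add: power2_eq_square)
    then show ?thesis using E1 E1p Vp qp by (intro mult_right_mono mult_mono) (auto simp: q_def)
  qed
  have ident: "E1 * (V'' + (1/4 - g^2) * V) = L * E2 * g * V - L^2 * E3 * V + L^2 * lam * V - L^2 * E4 + E1 * (1/4 - g^2) * V"
    using ode unfolding Vd by (simp add: algebra_simps)
  have SV: "S * V \<le> q / 100 * V" using Sq Vp by (intro mult_right_mono) auto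
  have qV: "q * V \<ge> q / 2" using V qp by (simp add: mult_left_mono[of "1/2" V q, simplified])
  have "E1 * (V'' + (1/4 - g^2) * V) > 0"
    unfolding ident using T1 T2 T3 T4 T5 SV qV Sq qp by linarith
  moreover note E1p
  ultimately show ?thesis by (simp add: zero_less_mult_iff)
qed


lemma coeff_bounds:
  fixes \<gamma> :: real
  shows "\<exists>B2 B3 B4. \<forall>t\<in>{0..1/2}. \<bar>((1 + 2*\<gamma>) * t^2 - 3*t + 4) / (1 - t)\<bar> \<le> B2 \<and> \<bar>e3 \<gamma> t\<bar> \<le> B3
     \<and> \<bar>2 * (2 + (\<gamma> - 1) * t) / (1 - t)^3 * ((2*\<gamma> - 3) * t^2 + 8*t - 3)\<bar> \<le> B4"
proof -
  have c2: "continuous_on {0..1/2} (\<lambda>t. ((1 + 2*\<gamma>) * t^2 - 3*t + 4) / (1 - t))"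
    by (intro continuous_intros) auto
  have c3: "continuous_on {0..1/2} (e3 \<gamma>)"
    unfolding e3_def by (intro continuous_intros) auto
  have c4: "continuous_on {0..1/2} (\<lambda>t. 2 * (2 + (\<gamma> - 1) * t) / (1 - t)^3 * ((2*\<gamma> - 3) * t^2 + 8*t - 3))"
    by (intro continuous_intros) auto
  obtain B2 where b2: "\<forall>t\<in>{0..1/2}. \<bar>((1 + 2*\<gamma>) * t^2 - 3*t + 4) / (1 - t)\<bar> \<le> B2"
    using cont_bound[OF c2] by blast
  obtain B3 where b3: "\<forall>t\<in>{0..1/2}. \<bar>e3 \<gamma> t\<bar> \<le> B3"
    using cont_bound[OF c3] by blast
  obtain B4 where b4: "\<forall>t\<in>{0..1/2}. \<bar>2 * (2 + (\<gamma> - 1) * t) / (1 - t)^3 * ((2*\<gamma> - 3) * t^2 + 8*t - 3)\<bar> \<le> B4"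
    using cont_bound[OF c4] by blast
  show ?thesis using b2 b3 b4 by blast
qed



theorem lemma2p7:
  fixes r0 r1 :: real
  assumes "0 < r0" and "r0 < r1"
  shows "\<exists>\<sigma>0. 0 < \<sigma>0 \<and> \<sigma>0 < 1 \<and>
    (\<forall>\<gamma> pb rhob ts. \<gamma> > 1 \<and> pb > 0 \<and> rhob > 0 \<and> 0 < ts \<and> ts < \<sigma>0 \<longrightarrow>
       (\<exists>rs. r0 < rs \<and> rs < r1 \<and>
          (\<forall>rb u rho p. rs < rb \<and> rb < r1 \<and> background_sol \<gamma> r1 rb pb rhob ts u rho p
               \<longrightarrow> S_condition \<gamma> r1 rb u rho p)))"
proof -
  have r0: "0 < r0" "r0 < r1" using assms by auto
  have main: "\<exists>rs. r0 < rs \<and> rs < r1 \<and>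
          (\<forall>rb u rho p. rs < rb \<and> rb < r1 \<and> background_sol \<gamma> r1 rb pb rhob ts u rho p
               \<longrightarrow> S_condition \<gamma> r1 rb u rho p)"
    if H: "\<gamma> > 1" "pb > 0" "rhob > 0" "0 < ts" "ts < 1/2" for \<gamma> pb rhob ts :: real
  proof -
    obtain B2 B3 B4 where bnd: "\<forall>t\<in>{0..1/2}. \<bar>((1 + 2*\<gamma>) * t^2 - 3*t + 4) / (1 - t)\<bar> \<le> B2 \<and> \<bar>e3 \<gamma> t\<bar> \<le> B3
     \<and> \<bar>2 * (2 + (\<gamma> - 1) * t) / (1 - t)^3 * ((2*\<gamma> - 3) * t^2 + 8*t - 3)\<bar> \<le> B4"
      using coeff_bounds[of \<gamma>] by blast
    define E where "E = exp (2 * r1 / r0)"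
    define K0 where "K0 = (1 - ts) / (rhob powr \<gamma> * (1 + (\<gamma> - 1) * ts))"
    define B where "B = 2 * r1 * \<bar>B2\<bar> + \<bar>B3\<bar> + K0 * (rhob * E) powr \<gamma> * \<bar>B4\<bar> + 8 * \<gamma> / r0 + 1"
    have K0p: "K0 > 0" unfolding K0_def using H by (intro divide_pos_pos mult_pos_pos add_pos_nonneg) auto
    have B1: "B \<ge> 1" unfolding B_def using K0p r0 H by (intro add_increasing add_nonneg_nonneg mult_nonneg_nonneg) auto
    define m where "m = min 1 (min (r0^2/100) (1/40))"
    have mp: "0 < m" "m \<le> 1" "m \<le> r0^2/100" "m \<le> 1/40" using r0 by (auto simp: m_def)
    define ell where "ell = m / B"
    have ellp: "0 < ell" "ell \<le> 1" using mp B1 by (auto simp: ell_def divide_le_eq)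
    have ellB: "ell * B = m" using B1 by (simp add: ell_def)
    define rs where "rs = max ((r0 + r1) / 2) (r1 - ell)"
    have rs: "r0 < rs" "rs < r1" using r0 ellp by (auto simp: rs_def less_max_iff_disj)
    show ?thesis
    proof (intro exI[of _ rs] conjI rs allI impI)
      fix rb u rho p
      assume A: "rs < rb \<and> rb < r1 \<and> background_sol \<gamma> r1 rb pb rhob ts u rho p"
      then have rb: "rs < rb" "rb < r1" and bg: "background_sol \<gamma> r1 rb pb rhob ts u rho p" by auto
      define L where "L = r1 - rb"
      have Lp: "0 < L" "L < ell" using rb by (auto simp: L_def rs_def)
      have LB: "L * B \<le> r0^2/100" "L * B < 1/40" "L \<le> 1"
      proof -
        have "L * B < ell * B" using Lp B1 by simp
        then show "L * B \<le> r0^2/100" "L * B < 1/40" using ellB mp by auto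
        show "L \<le> 1" using Lp ellp by simp
      qed
      have r0rb: "r0 < rb" using rs rb by simp
      have bb: "\<forall>r\<in>{rb..r1}. 0 < tfun \<gamma> u rho p r \<and> tfun \<gamma> u rho p r \<le> ts \<and> rho r \<le> rhob * exp (2 * r1 / r0)"
        by (rule bg_bounds[OF r0(1) r0rb rb(2) H(1) H(4) H(5) bg])
      have bgu: "\<forall>r\<in>{rb..r1}. rho r > 0 \<and> p r > 0 \<and> u r > 0 \<and> (u r)^2 < csq \<gamma> p rho r"
        and init: "p rb = pb" "rho rb = rhob" "(u rb)^2 = ts * csq \<gamma> p rho rb"
        using bg unfolding background_sol_def by auto
      have rbI: "rb \<in> {rb..r1}" using rb by auto
      have cpos: "csq \<gamma> p rho rb > 0" using bgu rbI H unfolding csq_def by auto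
      have tsr: "tfun \<gamma> u rho p rb = ts" unfolding tfun_def using init cpos by simp
      show "S_condition \<gamma> r1 rb u rho p"
        unfolding S_condition_def Let_def tsr init(2) init(1) L_def[symmetric]
      proof (intro allI notI)
        fix n :: nat
        define lam where "lam = real n * (real n + 1)"
        assume "\<exists>v v' v''.
             (\<forall>y\<in>{0..1}.
                 (v has_real_derivative v' y) (at y within {0..1}) \<and>
                 (v' has_real_derivative v'' y) (at y within {0..1}) \<and>
                 e1 (L * y + rb) (tfun \<gamma> u rho p (L * y + rb)) * v'' y +
                 L * e2 \<gamma> (L * y + rb) (tfun \<gamma> u rho p (L * y + rb)) * v' y +
                 L\<^sup>2 * (e3 \<gamma> (tfun \<gamma> u rho p (L * y + rb)) - real n * (real n + 1)) * v y =
                 - (L\<^sup>2 * e4 \<gamma> ts rhob (rho (L * y + rb)) (tfun \<gamma> u rho p (L * y + rb)))) \<and>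
             v 0 = 1 \<and> v 1 = 0 \<and>
             v' 0 = - (real n * (real n + 1) + - mu0 \<gamma> (u rb) (csq \<gamma> p rho rb) * mu6 \<gamma> (u rb) ts) /
                    (- mu0 \<gamma> (u rb) (csq \<gamma> p rho rb) * mu2 \<gamma> rb rhob (u rb) (csq \<gamma> p rho rb) *
                     mu5 \<gamma> rb pb (u rb) (csq \<gamma> p rho rb)) * L"
        then obtain v v' v'' where ode: "\<forall>y\<in>{0..1}.
                 (v has_real_derivative v' y) (at y within {0..1}) \<and>
                 (v' has_real_derivative v'' y) (at y within {0..1}) \<and>
                 e1 (L * y + rb) (tfun \<gamma> u rho p (L * y + rb)) * v'' y +
                 L * e2 \<gamma> (L * y + rb) (tfun \<gamma> u rho p (L * y + rb)) * v' y +
                 L\<^sup>2 * (e3 \<gamma> (tfun \<gamma> u rho p (L * y + rb)) - real n * (real n + 1)) * v y =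
                 - (L\<^sup>2 * e4 \<gamma> ts rhob (rho (L * y + rb)) (tfun \<gamma> u rho p (L * y + rb)))"
          and v0: "v 0 = 1" and v1: "v 1 = 0"
          and vd0: "v' 0 = - (real n * (real n + 1) + - mu0 \<gamma> (u rb) (csq \<gamma> p rho rb) * mu6 \<gamma> (u rb) ts) /
                    (- mu0 \<gamma> (u rb) (csq \<gamma> p rho rb) * mu2 \<gamma> rb rhob (u rb) (csq \<gamma> p rho rb) *
                     mu5 \<gamma> rb pb (u rb) (csq \<gamma> p rho rb)) * L"
          by blast
        have ubp: "u rb > 0" using bgu rbI by auto
        have rat: "- (real n * (real n + 1) + - mu0 \<gamma> (u rb) (csq \<gamma> p rho rb) * mu6 \<gamma> (u rb) ts) /
                    (- mu0 \<gamma> (u rb) (csq \<gamma> p rho rb) * mu2 \<gamma> rb rhob (u rb) (csq \<gamma> p rho rb) *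
                     mu5 \<gamma> rb pb (u rb) (csq \<gamma> p rho rb)) \<ge> - (8 * \<gamma> / r0)"
          by (rule mu_ratio[OF H(1) H(2) H(3) H(4) H(5) _ r0(1) ubp _ init(3)])
             (use r0rb init in \<open>auto simp: csq_def\<close>)
        have "v' 0 \<ge> - (8 * \<gamma> / r0) * L" unfolding vd0 using rat Lp by (intro mult_right_mono) auto
        moreover have "8 * \<gamma> / r0 * L \<le> B * L"
          using Lp r0 H K0p unfolding B_def by (intro mult_right_mono) (auto intro!: add_nonneg_nonneg mult_nonneg_nonneg)
        ultimately have h0: "v' 0 + 1/20 > 0" using LB by (simp add: mult.commute)
        have "v 1 > 0"
        proof (rule core_ode[of v v' v'' "1/20"])
          show "(v has_real_derivative v' y) (at y within {0..1})" if "y \<in> {0..1}" for y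
            using ode that by blast
          show "(v' has_real_derivative v'' y) (at y within {0..1})" if "y \<in> {0..1}" for y
            using ode that by blast
          fix y g :: real
          assume y: "y \<in> {0..1}" and g: "0 \<le> g" "g \<le> 3/10" and vy: "v y \<ge> 1/2" and vdy: "v' y = - g * v y"
          define r where "r = L * y + rb"
          have "L * y \<le> L" using y Lp by (simp add: mult_left_le)
          moreover have "0 \<le> L * y" using y Lp by simp
          ultimately have rI: "r \<in> {rb..r1}" unfolding r_def L_def by auto
          define T where "T = tfun \<gamma> u rho p r"
          have T: "0 < T" "T \<le> ts" "rho r \<le> rhob * E" using bb rI by (auto simp: T_def E_def)
          have TI: "T \<in> {0..1/2}" using T H by auto
          have rpos: "r > 0" "r0 \<le> r" using rI r0rb r0 by auto
          have rhop: "rho r > 0" using bgu rI by auto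
          have bT: "\<bar>((1 + 2*\<gamma>) * T^2 - 3*T + 4) / (1 - T)\<bar> \<le> B2" "\<bar>e3 \<gamma> T\<bar> \<le> B3"
            "\<bar>2 * (2 + (\<gamma> - 1) * T) / (1 - T)^3 * ((2*\<gamma> - 3) * T^2 + 8*T - 3)\<bar> \<le> B4"
            using bnd TI by auto
          have Bparts: "0 \<le> 2 * r1 * \<bar>B2\<bar>" "0 \<le> K0 * (rhob * E) powr \<gamma> * \<bar>B4\<bar>" "0 \<le> 8 * \<gamma> / r0"
            using r0 K0p H by auto
          have e1b: "e1 r T \<ge> r0^2/2"
          proof -
            have "r0^2 \<le> r^2" using rpos r0 by (intro power_mono) auto
            moreover have "1/2 \<le> 1 - T" using T H by simp
            ultimately have "r0^2 * (1/2) \<le> r^2 * (1 - T)" using r0 by (intro mult_mono) auto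
            then show ?thesis by (simp add: e1_def)
          qed
          have e2b: "\<bar>e2 \<gamma> r T\<bar> \<le> B"
          proof -
            have "e2 \<gamma> r T = 2 * r * (((1 + 2*\<gamma>) * T^2 - 3*T + 4) / (1 - T))" by (simp add: e2_def)
            then have "\<bar>e2 \<gamma> r T\<bar> = 2 * r * \<bar>((1 + 2*\<gamma>) * T^2 - 3*T + 4) / (1 - T)\<bar>"
              using rpos by (simp add: abs_mult)
            also have "\<dots> \<le> 2 * r1 * \<bar>B2\<bar>" using rpos rI bT(1) by (intro mult_mono) auto
            also have "\<dots> \<le> B" unfolding B_def using Bparts by auto
            finally show ?thesis .
          qed
          have e3b: "\<bar>e3 \<gamma> T\<bar> \<le> B" using bT(2) Bparts unfolding B_def by auto
          have e4b: "\<bar>e4 \<gamma> ts rhob (rho r) T\<bar> \<le> B"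
          proof -
            have "e4 \<gamma> ts rhob (rho r) T = K0 * (rho r powr \<gamma> * (2 * (2 + (\<gamma> - 1) * T) / (1 - T)^3 * ((2*\<gamma> - 3) * T^2 + 8*T - 3)))"
              unfolding e4_def K0_def by (simp add: ac_simps)
            then have "\<bar>e4 \<gamma> ts rhob (rho r) T\<bar> = K0 * (rho r powr \<gamma> * \<bar>2 * (2 + (\<gamma> - 1) * T) / (1 - T)^3 * ((2*\<gamma> - 3) * T^2 + 8*T - 3)\<bar>)"
              using K0p rhop by (simp add: abs_mult)
            also have "\<dots> \<le> K0 * ((rhob * E) powr \<gamma> * \<bar>B4\<bar>)"
              using K0p rhop T(3) bT(3) H by (intro mult_left_mono mult_mono powr_mono2) auto
            also have "\<dots> \<le> B" unfolding B_def using Bparts by (simp add: mult.assoc)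
            finally show ?thesis .
          qed
          have odey: "e1 r T * v'' y + L * e2 \<gamma> r T * v' y + L^2 * (e3 \<gamma> T - real n * (real n + 1)) * v y
                 = - (L^2 * e4 \<gamma> ts rhob (rho r) T)"
            using ode y unfolding r_def T_def by blast
          show "v'' y + (1/4 - g^2) * v y > 0"
            by (rule Pcheck[OF e1b r0(1) e2b e3b e4b Lp(1) LB(3) LB(1) _ vy g vdy odey]) simp
        qed (use v0 h0 in auto)
        then show False using v1 by simp
      qed
    qed
  qed
  show ?thesis by (intro exI[of _ "1/2"]) (use main in auto)
qed


end
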